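(* Consider the GSEM described in the context in the "CCC" case: conditional on $\mathbf W=\mathbf w$, $X\sim N(\mu_x,\sigma_x^2)$ with $\mu_x=\mathbf w_1^\top\boldsymbol\beta_x$, $M\sim N(\mu_m,\sigma_m^2)$ with $\mu_m=\mathbf w^\top\boldsymbol\beta_m$, and $Y\sim N(\mu_y,\sigma_y^2)$ with $\mu_y=\mathbf w^\top\boldsymbol\beta_y$, where $\sigma_x,\sigma_m,\sigma_y>0$ (so $X=\mu_x+\sigma_x Z_x$, $M=\mu_m+\sigma_m Z_m^*$, $Y=\mu_y+\sigma_y Z_y^*$). Then for any $x_0,x_1$, $$\mathrm{NDE}(x_0,x_1;\mathbf w)=\frac{\sigma_y\,\gamma\,(z_{x_1}-z_{x_0})}{\tau_y},\qquad \mathrm{NIE}(x_0,x_1;\mathbf w)=\frac{\sigma_y\,\alpha\beta\,(z_{x_1}-z_{x_0})}{\tau_y},$$ where $z_x=(x-\mathbf w_1^\top\boldsymbol\beta_x)/\sigma_x$ and $\tau_y=\sqrt{(\gamma+\alpha\beta)^2+\beta^2+1}$. Consequently, for $x_0\neq x_1$: $\mathrm{NDE}(x_0,x_1;\mathbf w)=0$ if and only if $\gamma=0$, and $\mathrm{NIE}(x_0,x_1;\mathbf w)=0$ if and only if $\alpha=0$ or $\beta=0$.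
   Context: Generalized structural equation model (GSEM). Let $X$ (exposure), $M$ (mediator), $Y$ (outcome) be scalar random variables and $\mathbf W=(\mathbf W_1^\top,\mathbf W_2^\top)^\top$ a vector of confounders (first entry $1$), with $\mathbf w=(\mathbf w_1^\top,\mathbf w_2^\top)^\top$ a fixed value. Fix real parameters $\alpha,\beta,\gamma$ and let $(Z_x,Z_m,Z_y)$ be latent variables with $Z_x\sim N(0,1)$, $Z_m=\alpha Z_x+\epsilon_m$, $Z_y=\gamma Z_x+\beta Z_m+\epsilon_y$, where $Z_x,\epsilon_m,\epsilon_y$ are independent $N(0,1)$ (independent of $\mathbf W$). Put $\tau_m=\sqrt{\alpha^2+1}$, $\tau_y=\sqrt{(\gamma+\alpha\beta)^2+\beta^2+1}$, $Z_m^*=Z_m/\tau_m$, $Z_y^*=Z_y/\tau_y$ (each standard normal). Conditional on $\mathbf W=\mathbf w$, with marginal CDFs $F_x(\cdot\mid\mathbf w),F_m(\cdot\mid\mathbf w),F_y(\cdot\mid\mathbf w)$ given by generalized linear models, the observed variables are $X=F_x^{-1}(\Phi(Z_x))$, $M=F_m^{-1}(\Phi(Z_m^* ))$, $Y=F_y^{-1}(\Phi(Z_y^* ))$, where $\Phi,\phi$ denote the standard normal CDF and density and $F^{-1}$ is the generalized inverse (quantile function). Counterfactual mean: $\mathrm E\{Y(x_a,M(x_b))\mid\mathbf W=\mathbf w\}:=\mathrm E_M\{\mathrm E(Y\mid M,X=x_a,\mathbf W=\mathbf w)\mid X=x_b,\mathbf W=\mathbf w\}$. Conditional natural direct and indirect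 effects for a change of $X$ from $x_0$ to $x_1$: $\mathrm{NDE}(x_0,x_1;\mathbf w)=\mathrm E\{Y(x_1,M(x_0))\mid\mathbf w\}-\mathrm E\{Y(x_0,M(x_0))\mid\mathbf w\}$ and $\mathrm{NIE}(x_0,x_1;\mathbf w)=\mathrm E\{Y(x_1,M(x_1))\mid\mathbf w\}-\mathrm E\{Y(x_1,M(x_0))\mid\mathbf w\}$. *)

theory Defs
  imports "HOL-Probability.Probability"
begin

definition phi :: "real \<Rightarrow> real" where
  "phi z = normal_density 0 1 z"

definition tau_m :: "real \<Rightarrow> real" where
  "tau_m \<alpha> = sqrt (\<alpha>\<^sup>2 + 1)"

definition tau_y :: "real \<Rightarrow> real \<Rightarrow> real \<Rightarrow> real" where
  "tau_y \<alpha> \<beta> \<gamma> = sqrt ((\<gamma> + \<alpha> * \<beta>)\<^sup>2 + \<beta>\<^sup>2 + 1)"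

(* Joint density of the latent vector (Z_x, Z_m, Z_y) of the structural model
   Z_x ~ N(0,1), Z_m = alpha Z_x + eps_m, Z_y = gamma Z_x + beta Z_m + eps_y,
   with Z_x, eps_m, eps_y independent N(0,1). *)
definition latent_density :: "real \<Rightarrow> real \<Rightarrow> real \<Rightarrow> real \<Rightarrow> real \<Rightarrow> real \<Rightarrow> real" where
  "latent_density \<alpha> \<beta> \<gamma> zx zm zy =
     phi zx * phi (zm - \<alpha> * zx) * phi (zy - \<gamma> * zx - \<beta> * zm)"

(* CCC case, conditional on W = w: X = mu_x + sigma_x Z_x, M = mu_m + sigma_m Z_m / tau_m,
   Y = mu_y + sigma_y Z_y / tau_y.  Joint (conditional on W = w) density of (X, M, Y),
   obtained from the latent density by the linear change of variables. *)
definition ccc_density ::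
  "real \<Rightarrow> real \<Rightarrow> real \<Rightarrow> real \<Rightarrow> real \<Rightarrow> real \<Rightarrow> real \<Rightarrow> real \<Rightarrow> real
   \<Rightarrow> real \<Rightarrow> real \<Rightarrow> real \<Rightarrow> real" where
  "ccc_density \<alpha> \<beta> \<gamma> \<mu>x \<sigma>x \<mu>m \<sigma>m \<mu>y \<sigma>y x m y =
     latent_density \<alpha> \<beta> \<gamma> ((x - \<mu>x) / \<sigma>x)
        (tau_m \<alpha> * (m - \<mu>m) / \<sigma>m) (tau_y \<alpha> \<beta> \<gamma> * (y - \<mu>y) / \<sigma>y)
     * (tau_m \<alpha> * tau_y \<alpha> \<beta> \<gamma> / (\<sigma>x * \<sigma>m * \<sigma>y))"

definition dens_XM :: "(real \<Rightarrow> real \<Rightarrow> real \<Rightarrow> real) \<Rightarrow> real \<Rightarrow> real \<Rightarrow> real" where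
  "dens_XM f x m = (\<integral>y. f x m y \<partial>lborel)"

definition dens_X :: "(real \<Rightarrow> real \<Rightarrow> real \<Rightarrow> real) \<Rightarrow> real \<Rightarrow> real" where
  "dens_X f x = (\<integral>m. dens_XM f x m \<partial>lborel)"

definition cond_mean_Y :: "(real \<Rightarrow> real \<Rightarrow> real \<Rightarrow> real) \<Rightarrow> real \<Rightarrow> real \<Rightarrow> real" where
  "cond_mean_Y f x m = (\<integral>y. y * f x m y \<partial>lborel) / dens_XM f x m"

(* E{Y(x_a, M(x_b))} = E_M { E(Y | M, X = x_a) | X = x_b } *)
definition cf_mean :: "(real \<Rightarrow> real \<Rightarrow> real \<Rightarrow> real) \<Rightarrow> real \<Rightarrow> real \<Rightarrow> real" where
  "cf_mean f xa xb = (\<integral>m. cond_mean_Y f xa m * dens_XM f xb m \<partial>lborel) / dens_X f xb"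

definition NDE :: "(real \<Rightarrow> real \<Rightarrow> real \<Rightarrow> real) \<Rightarrow> real \<Rightarrow> real \<Rightarrow> real" where
  "NDE f x0 x1 = cf_mean f x1 x0 - cf_mean f x0 x0"

definition NIE :: "(real \<Rightarrow> real \<Rightarrow> real \<Rightarrow> real) \<Rightarrow> real \<Rightarrow> real \<Rightarrow> real" where
  "NIE f x0 x1 = cf_mean f x1 x1 - cf_mean f x1 x0"

end

theory Submission
  imports Defs
begin

lemma phi_affine:
  assumes a: "a > (0::real)"
  shows "phi (a*y - c) = normal_density (c/a) (1/a) y / a"
proof -
  have "(y - c/a)^2 / (2 * (1/a)^2) = (a*y-c)^2/2"
    using a by (simp add: field_simps power2_eq_square)
  moreover have "sqrt (2*pi*(1/a)^2) = sqrt (2*pi) / a"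
    using a by (simp add: real_sqrt_mult real_sqrt_divide)
  ultimately show ?thesis using a
    unfolding phi_def normal_density_def by (simp add: field_simps)
qed

lemma hb_lin:
  assumes a: "a > (0::real)"
  shows "has_bochner_integral lborel (\<lambda>y. (A + B*y) * (D * phi (a*y - c))) (D/a*(A + B*(c/a)))"
proof -
  have s: "0 < 1/a" using a by simp
  have h0: "has_bochner_integral lborel (normal_density (c/a) (1/a)) 1"
    using s by (simp add: has_bochner_integral_iff integrable_normal_density integral_normal_density)
  have h1: "has_bochner_integral lborel (\<lambda>y. normal_density (c/a) (1/a) y * y) (c/a)"
    by (rule normal_moment_nz_1[OF s])
  have g0: "has_bochner_integral lborel (\<lambda>y. (A*D/a) * normal_density (c/a) (1/a) y) ((A*D/a) * 1)"
    by (rule has_bochner_integral_mult_right[OF h0])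
  have g1: "has_bochner_integral lborel (\<lambda>y. (B*D/a) * (normal_density (c/a) (1/a) y * y)) ((B*D/a) * (c/a))"
    by (rule has_bochner_integral_mult_right[OF h1])
  have g: "has_bochner_integral lborel (\<lambda>y. (A*D/a) * normal_density (c/a) (1/a) y + (B*D/a) * (normal_density (c/a) (1/a) y * y)) ((A*D/a) * 1 + (B*D/a) * (c/a))"
    by (rule has_bochner_integral_add[OF g0 g1])
  have eqf: "(\<lambda>y. (A + B*y) * (D * phi (a*y - c))) = (\<lambda>y. (A*D/a) * normal_density (c/a) (1/a) y + (B*D/a) * (normal_density (c/a) (1/a) y * y))"
    apply (rule ext) apply (simp only: phi_affine[OF a]) using a apply (simp add: field_simps) done
  have eqv: "(A*D/a) * 1 + (B*D/a) * (c/a) = D/a*(A + B*(c/a))"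
    using a by (simp add: field_simps)
  show ?thesis using g unfolding eqf eqv .
qed

lemma int_lin:
  assumes "a > (0::real)"
  shows "(\<integral>y. (A + B*y) * (D * phi (a*y - c)) \<partial>lborel) = D/a*(A + B*(c/a))"
  using hb_lin[OF assms] by (rule has_bochner_integral_integral_eq)

lemma phi_pos: "phi x > 0"
  unfolding phi_def by (rule normal_density_pos) simp


lemma cf_formula:
  fixes \<alpha> \<beta> \<gamma> \<mu>x \<sigma>x \<mu>m \<sigma>m \<mu>y \<sigma>y xa xb :: real
  assumes sx: "\<sigma>x > 0" and sm: "\<sigma>m > 0" and sy: "\<sigma>y > 0"
  shows "cf_mean (ccc_density \<alpha> \<beta> \<gamma> \<mu>x \<sigma>x \<mu>m \<sigma>m \<mu>y \<sigma>y) xa xb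
     = \<mu>y + \<sigma>y / tau_y \<alpha> \<beta> \<gamma> * (\<gamma>*((xa-\<mu>x)/\<sigma>x) + \<beta>*\<alpha>*((xb-\<mu>x)/\<sigma>x))"
proof -
  define tm where "tm = tau_m \<alpha>"
  define ty where "ty = tau_y \<alpha> \<beta> \<gamma>"
  have tm: "tm > 0" unfolding tm_def tau_m_def by (simp add: add_nonneg_pos)
  have ty: "ty > 0" unfolding ty_def tau_y_def by (simp add: add_nonneg_pos)
  define f where "f = ccc_density \<alpha> \<beta> \<gamma> \<mu>x \<sigma>x \<mu>m \<sigma>m \<mu>y \<sigma>y"
  define K where "K = tm*ty/(\<sigma>x*\<sigma>m*\<sigma>y)"
  define z where "z = (\<lambda>x. (x-\<mu>x)/\<sigma>x)"
  define zm where "zm = (\<lambda>m. tm*(m-\<mu>m)/\<sigma>m)"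
  define a where "a = ty/\<sigma>y"
  have a: "a > 0" unfolding a_def using ty sy by simp
  define D where "D = (\<lambda>x m. phi (z x) * phi (zm m - \<alpha> * z x) * K)"
  define c where "c = (\<lambda>x m. ty*\<mu>y/\<sigma>y + \<gamma>*z x + \<beta>*zm m)"
  have Dpos: "D x m > 0" for x m
    unfolding D_def K_def using tm ty sx sm sy phi_pos by simp
  have fexp: "f x m y = (B0 + B1*y) * (D x m * phi (a*y - c x m))" if "B0 + B1*y = 1" for x m y B0 B1
  proof -
    have arg: "ty*(y-\<mu>y)/\<sigma>y - \<gamma>*z x - \<beta>*zm m = a*y - c x m"
      unfolding a_def c_def using sy by (simp add: field_simps)
    show ?thesis unfolding that f_def ccc_density_def latent_density_def
      tm_def[symmetric] ty_def[symmetric] D_def K_def z_def[symmetric]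
      using arg[unfolded zm_def z_def] by (simp add: z_def zm_def)
  qed
  have dXM: "dens_XM f x m = D x m / a" for x m
  proof -
    have "dens_XM f x m = (\<integral>y. (1 + 0*y) * (D x m * phi (a*y - c x m)) \<partial>lborel)"
      unfolding dens_XM_def by (rule Bochner_Integration.integral_cong[OF refl]) (simp add: fexp[of 1 0])
    also have "\<dots> = D x m / a" using int_lin[OF a, of 1 0 "D x m" "c x m"] by simp
    finally show ?thesis .
  qed
  have cmY: "cond_mean_Y f x m = c x m / a" for x m
  proof -
    have "(\<integral>y. y * f x m y \<partial>lborel) = (\<integral>y. (0 + 1*y) * (D x m * phi (a*y - c x m)) \<partial>lborel)"
      by (rule Bochner_Integration.integral_cong[OF refl]) (simp add: fexp[of 1 0])
    also have "\<dots> = D x m / a * (c x m / a)" using int_lin[OF a, of 0 1 "D x m" "c x m"] by simp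
    finally show ?thesis unfolding cond_mean_Y_def dXM using Dpos[of x m] a by simp
  qed
  define a' where "a' = tm/\<sigma>m"
  have a': "a' > 0" unfolding a'_def using tm sm by simp
  define c' where "c' = tm*\<mu>m/\<sigma>m + \<alpha>*z xb"
  define D' where "D' = phi (z xb) * K / a"
  define A where "A = (ty*\<mu>y/\<sigma>y + \<gamma>*z xa - \<beta>*tm*\<mu>m/\<sigma>m)/a"
  define B where "B = \<beta>*tm/\<sigma>m/a"
  have zmarg: "zm m - \<alpha> * z xb = a'*m - c'" for m
    unfolding zm_def a'_def c'_def using sm by (simp add: field_simps)
  have e1: "cond_mean_Y f xa m * dens_XM f xb m = (A + B*m) * (D' * phi (a'*m - c'))" for m
    unfolding cmY dXM D_def D'_def zmarg[symmetric] A_def B_def c_def zm_def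
    using a sm by (simp add: field_simps)
  have e2: "dens_XM f xb m = (1 + 0*m) * (D' * phi (a'*m - c'))" for m
    unfolding dXM D_def D'_def zmarg[symmetric] using a by (simp add: field_simps)
  have I1: "(\<integral>m. cond_mean_Y f xa m * dens_XM f xb m \<partial>lborel) = D'/a'*(A + B*(c'/a'))"
    unfolding e1 by (rule int_lin[OF a'])
  have I2: "dens_X f xb = D'/a'*(1 + 0*(c'/a'))"
    unfolding dens_X_def e2 by (rule int_lin[OF a'])
  have D'pos: "D' > 0" unfolding D'_def K_def using phi_pos a tm ty sx sm sy by simp
  have "cf_mean f xa xb = A + B*(c'/a')"
    unfolding cf_mean_def I1 I2 using D'pos a' by simp
  also have "\<dots> = \<mu>y + \<sigma>y / ty * (\<gamma>*z xa + \<beta>*\<alpha>*z xb)"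
    unfolding A_def B_def c'_def a'_def a_def using tm ty sm sy by (simp add: field_simps)
  finally show ?thesis unfolding f_def ty_def z_def .
qed

theorem proposition1:
  fixes \<alpha> \<beta> \<gamma> \<sigma>x \<sigma>m \<sigma>y x0 x1 :: real
    and w1 \<beta>x \<beta>m1 \<beta>y1 :: "real ^ 'p"
    and w2 \<beta>m2 \<beta>y2 :: "real ^ 'q"
  assumes "\<sigma>x > 0" and "\<sigma>m > 0" and "\<sigma>y > 0"
  defines "\<mu>x \<equiv> w1 \<bullet> \<beta>x"
    and "\<mu>m \<equiv> w1 \<bullet> \<beta>m1 + w2 \<bullet> \<beta>m2"
    and "\<mu>y \<equiv> w1 \<bullet> \<beta>y1 + w2 \<bullet> \<beta>y2"
  defines "f \<equiv> ccc_density \<alpha> \<beta> \<gamma> \<mu>x \<sigma>x \<mu>m \<sigma>m \<mu>y \<sigma>y"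
    and "z \<equiv> (\<lambda>x. (x - \<mu>x) / \<sigma>x)"
  shows "NDE f x0 x1 = \<sigma>y * \<gamma> * (z x1 - z x0) / tau_y \<alpha> \<beta> \<gamma>
       \<and> NIE f x0 x1 = \<sigma>y * \<alpha> * \<beta> * (z x1 - z x0) / tau_y \<alpha> \<beta> \<gamma>
       \<and> (x0 \<noteq> x1 \<longrightarrow> (NDE f x0 x1 = 0 \<longleftrightarrow> \<gamma> = 0)
                      \<and> (NIE f x0 x1 = 0 \<longleftrightarrow> \<alpha> = 0 \<or> \<beta> = 0))"
proof -
  have ty: "tau_y \<alpha> \<beta> \<gamma> > 0" unfolding tau_y_def by (simp add: add_nonneg_pos)
  have nde: "NDE f x0 x1 = \<sigma>y * \<gamma> * (z x1 - z x0) / tau_y \<alpha> \<beta> \<gamma>"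
    unfolding NDE_def f_def cf_formula[OF assms(1-3)] z_def using ty assms(1) by (simp add: field_simps)
  have nie: "NIE f x0 x1 = \<sigma>y * \<alpha> * \<beta> * (z x1 - z x0) / tau_y \<alpha> \<beta> \<gamma>"
    unfolding NIE_def f_def cf_formula[OF assms(1-3)] z_def using ty assms(1) by (simp add: field_simps)
  have "x0 \<noteq> x1 \<Longrightarrow> z x1 - z x0 \<noteq> 0"
    unfolding z_def using assms(1) by (simp add: field_simps)
  then show ?thesis using nde nie ty assms(3) by auto
qed


end
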